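(* Fix a cutoff $C>0$ and pool size $K\ge2$. Let $(V_1,S_1),\dots,(V_K,S_K)$ be i.i.d. pairs, where $V_j\ge0$ is the true quantitative test result and $S_j$ is a risk score satisfying the risk-score condition below. Let $T_j=\sum_{l=j}^K V_l$ with distribution function $\mathbf F_{T_j}$, let $V_{[1]},\dots,V_{[K]}$ be the $V_j$ listed in decreasing order of $S_j$, and $T_{[j]}=\sum_{l=j}^K V_{[l]}$. Define the testing efficiencies (expected number of assays per individual) \[ \phi_{\mathrm{IND}}=1,\quad \phi_{\mathrm{MP}}=\frac1K+\Pr(T_1>C),\quad \phi_{\mathrm{MPA}}=1-\frac1K\sum_{j=1}^{K-1}\mathbf F_{T_j}(C),\quad \phi_{\mathrm{mMPA}}=1-\frac1K\sum_{j=1}^{K-1}\Pr(T_{[j]}\le C). \] Then $\phi_{\mathrm{mMPA}}\le\phi_{\mathrm{MPA}}\le\min(\phi_{\mathrm{MP}},\phi_{\mathrm{IND}})$.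
   Context: For random variables $X,Y$, $X\succeq Y$ means $\Pr(X>v)\ge\Pr(Y>v)$ for all $v\ge0$. A risk score satisfies the risk-score condition if $S_j\ge S_{j'}$ implies $V_j\succeq V_{j'}$. Procedures (failure means $V>C$; the pool is positive iff $T_1=\sum_jV_j>C$, i.e. $V_{\mathrm{pool}}>C/K$): IND tests every individual. MP tests the pool and, if positive, all $K$ individuals. MPA, after a positive pool, tests individuals sequentially in a random order, updating $T_{j+1}=T_j-V_j$, and stops as soon as $T_{j+1}\le C$, declaring the remaining negative (using $1+\sum_{j=1}^{K-1}\mathbf 1(T_j>C)$ assays). mMPA is the same as MPA but tests individuals in decreasing order of risk score (using $1+\sum_{j=1}^{K-1}\mathbf 1(T_{[j]}>C)$ assays). *)

theory Defs
  imports "HOL-Probability.Probability"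
begin

definition Tsum :: "nat \<Rightarrow> (nat \<Rightarrow> 'a \<Rightarrow> real) \<Rightarrow> nat \<Rightarrow> 'a \<Rightarrow> real" where
  "Tsum K V j \<omega> = (\<Sum>l = j..K. V l \<omega>)"

text \<open>Position of individual l in the list sorted by decreasing risk score
  (ties broken by index).\<close>
definition score_rank :: "nat \<Rightarrow> (nat \<Rightarrow> 'a \<Rightarrow> real) \<Rightarrow> nat \<Rightarrow> 'a \<Rightarrow> nat" where
  "score_rank K S l \<omega> =
     card {m \<in> {1..K}. S m \<omega> > S l \<omega> \<or> (S m \<omega> = S l \<omega> \<and> m < l)} + 1"

text \<open>T_[j] = sum of V_[l] for l >= j, where V_[i] is the V of the individual at position i.\<close>
definition Tord :: "nat \<Rightarrow> (nat \<Rightarrow> 'a \<Rightarrow> real) \<Rightarrow> (nat \<Rightarrow> 'a \<Rightarrow> real) \<Rightarrow> nat \<Rightarrow> 'a \<Rightarrow> real" where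
  "Tord K V S j \<omega> = (\<Sum>l \<in> {l \<in> {1..K}. j \<le> score_rank K S l \<omega>}. V l \<omega>)"

definition phi_IND :: real where "phi_IND = 1"

definition phi_MP :: "'a measure \<Rightarrow> nat \<Rightarrow> (nat \<Rightarrow> 'a \<Rightarrow> real) \<Rightarrow> real \<Rightarrow> real" where
  "phi_MP M K V C = 1 / real K + measure M {\<omega> \<in> space M. Tsum K V 1 \<omega> > C}"

definition phi_MPA :: "'a measure \<Rightarrow> nat \<Rightarrow> (nat \<Rightarrow> 'a \<Rightarrow> real) \<Rightarrow> real \<Rightarrow> real" where
  "phi_MPA M K V C =
     1 - (1 / real K) * (\<Sum>j = 1..K - 1. cdf (distr M borel (Tsum K V j)) C)"

definition phi_mMPA :: "'a measure \<Rightarrow> nat \<Rightarrow> (nat \<Rightarrow> 'a \<Rightarrow> real) \<Rightarrow> (nat \<Rightarrow> 'a \<Rightarrow> real) \<Rightarrow> real \<Rightarrow> real" where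
  "phi_mMPA M K V S C =
     1 - (1 / real K) * (\<Sum>j = 1..K - 1. measure M {\<omega> \<in> space M. Tord K V S j \<omega> \<le> C})"

text \<open>Risk-score condition: the conditional survival function of V_j given S_j = s,
  g v s = Pr(V_j > v | S_j = s), can be chosen nondecreasing in s for every v >= 0.\<close>
definition risk_score_condition ::
  "'a measure \<Rightarrow> nat \<Rightarrow> (nat \<Rightarrow> 'a \<Rightarrow> real) \<Rightarrow> (nat \<Rightarrow> 'a \<Rightarrow> real) \<Rightarrow> bool" where
  "risk_score_condition M K V S \<longleftrightarrow>
    (\<exists>g :: real \<Rightarrow> real \<Rightarrow> real.
      (\<forall>v \<ge> 0. mono (g v) \<and> g v \<in> borel_measurable borel) \<and>
      (\<forall>j \<in> {1..K}. \<forall>v \<ge> 0.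
         integrable M (\<lambda>\<omega>. g v (S j \<omega>)) \<and>
         (\<forall>A \<in> sets borel.
            measure M {\<omega> \<in> space M. V j \<omega> > v \<and> S j \<omega> \<in> A}
            = (\<integral>\<omega>. indicator A (S j \<omega>) * g v (S j \<omega>) \<partial>M))))"

end

theory Submission
  imports Defs "HOL-Probability.Probability"
begin

definition rk :: "nat set \<Rightarrow> (nat \<Rightarrow> real) \<Rightarrow> nat \<Rightarrow> nat" where
  "rk I s l = card {m \<in> I. s m > s l \<or> (s m = s l \<and> m < l)} + 1"

lemma rk_less:
  assumes fin: "finite I" and d: "d \<in> I" and pr: "s d > s l \<or> (s d = s l \<and> d < l)"
  shows "rk I s d < rk I s l"
proof -
  have "{m \<in> I. s m > s d \<or> (s m = s d \<and> m < d)} \<subset> {m \<in> I. s m > s l \<or> (s m = s l \<and> m < l)}"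
  proof
    show "{m \<in> I. s m > s d \<or> (s m = s d \<and> m < d)} \<subseteq> {m \<in> I. s m > s l \<or> (s m = s l \<and> m < l)}"
      using pr by auto
    show "{m \<in> I. s m > s d \<or> (s m = s d \<and> m < d)} \<noteq> {m \<in> I. s m > s l \<or> (s m = s l \<and> m < l)}"
      using pr d by auto
  qed
  then have "card {m \<in> I. s m > s d \<or> (s m = s d \<and> m < d)} < card {m \<in> I. s m > s l \<or> (s m = s l \<and> m < l)}"
    using fin by (intro psubset_card_mono) auto
  then show ?thesis by (simp add: rk_def)
qed

lemma rk_order:
  assumes fin: "finite I" and "l \<in> I" "d \<in> I" and lt: "rk I s l < rk I s d"
  shows "s d \<le> s l"
proof (rule ccontr)
  assume "\<not> s d \<le> s l"
  then have "rk I s d < rk I s l" using rk_less[OF fin \<open>d \<in> I\<close>] by auto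
  then show False using lt by simp
qed

lemma rk_inj:
  assumes fin: "finite I"
  shows "inj_on (rk I s) I"
proof (rule inj_onI)
  fix l d assume l: "l \<in> I" and d: "d \<in> I" and eq: "rk I s l = rk I s d"
  show "l = d"
  proof (rule ccontr)
    assume ne: "l \<noteq> d"
    have "s d > s l \<or> (s d = s l \<and> d < l) \<or> s l > s d \<or> (s l = s d \<and> l < d)"
      using ne by (metis linorder_neqE_linordered_idom linorder_neqE_nat)
    then have "rk I s d < rk I s l \<or> rk I s l < rk I s d"
      using rk_less[OF fin d, of s l] rk_less[OF fin l, of s d] by auto
    then show False using eq by simp
  qed
qed

lemma rk_range:
  assumes fin: "finite I" and l: "l \<in> I"
  shows "rk I s l \<in> {1..card I}"
proof -
  have "{m \<in> I. s m > s l \<or> (s m = s l \<and> m < l)} \<subseteq> I - {l}" by auto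
  then have "card {m \<in> I. s m > s l \<or> (s m = s l \<and> m < l)} \<le> card (I - {l})"
    using fin by (intro card_mono) auto
  also have "\<dots> = card I - 1" using l fin by simp
  finally have c: "card {m \<in> I. s m > s l \<or> (s m = s l \<and> m < l)} \<le> card I - 1" .
  have "card I \<ge> 1" using l fin by (metis One_nat_def Suc_leI card_gt_0_iff empty_iff)
  then show ?thesis using c by (simp add: rk_def)
qed

lemma rk_image:
  assumes fin: "finite I"
  shows "rk I s ` I = {1..card I}"
proof -
  have sub: "rk I s ` I \<subseteq> {1..card I}" using rk_range[OF fin] by auto
  have "card (rk I s ` I) = card I" using card_image[OF rk_inj[OF fin]] .
  then show ?thesis using card_subset_eq[OF _ sub] by simp
qed

lemma rk_card:
  assumes fin: "finite I"
  shows "card {l \<in> I. j \<le> rk I s l} = card {r \<in> {1..card I}. j \<le> r}"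
proof -
  have "rk I s ` {l \<in> I. j \<le> rk I s l} = {r \<in> {1..card I}. j \<le> r}"
    using rk_image[OF fin, of s] by auto
  moreover have "card (rk I s ` {l \<in> I. j \<le> rk I s l}) = card {l \<in> I. j \<le> rk I s l}"
    by (rule card_image) (rule inj_on_subset[OF rk_inj[OF fin]], auto)
  ultimately show ?thesis by simp
qed


locale rpm =
  fixes \<mu> :: "(real \<times> real) measure" and G :: "real \<Rightarrow> real \<Rightarrow> real"
  assumes prob_mu: "prob_space \<mu>"
    and sets_mu: "sets \<mu> = sets (borel \<Otimes>\<^sub>M borel)"
    and G_mono: "\<And>w. mono (G w)"
    and G_meas: "\<And>w. G w \<in> borel_measurable borel"
    and G_int: "\<And>w. integrable \<mu> (\<lambda>y. G w (snd y))"
    and G_id: "\<And>w A. A \<in> sets borel \<Longrightarrow>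
       measure \<mu> {y \<in> space \<mu>. w < fst y \<and> snd y \<in> A} = (\<integral>y. indicator A (snd y) * G w (snd y) \<partial>\<mu>)"

sublocale rpm \<subseteq> M: prob_space \<mu> by (rule prob_mu)

context rpm begin
lemmas [measurable_cong] = sets_mu
lemmas [measurable] = G_meas
lemma space_mu[simp]: "space \<mu> = UNIV"
  using sets_eq_imp_space_eq[OF sets_mu] by (simp add: space_pair_measure)

lemma test: "(\<lambda>s. ((0::real,s), u)) \<in> measurable borel (\<mu> \<Otimes>\<^sub>M \<mu>)"
  by measurable

lemma integrable_fst_mu: "integrable (\<mu> \<Otimes>\<^sub>M \<mu>) (\<lambda>p. G w (snd (fst p)))"
proof -
  have "integrable (distr (\<mu> \<Otimes>\<^sub>M \<mu>) \<mu> fst) (\<lambda>y. G w (snd y))"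
    using G_int[of w] by (simp add: M.distr_pair_fst)
  moreover have "(\<lambda>y. G w (snd y)) \<in> borel_measurable \<mu>" by measurable
  ultimately show ?thesis by (subst (asm) integrable_distr_eq) auto
qed

lemma integrable_snd_mu: "integrable (\<mu> \<Otimes>\<^sub>M \<mu>) (\<lambda>p. G w (snd (snd p)))"
proof -
  interpret P: pair_prob_space \<mu> \<mu> ..
  have "integrable (\<mu> \<Otimes>\<^sub>M \<mu>) (\<lambda>(x,y). G w (snd (fst (y,x))))"
    using P.integrable_product_swap[OF integrable_fst_mu[of w]] by simp
  then show ?thesis by (simp add: case_prod_unfold)
qed

lemma core:
  fixes w :: real and H :: "((real\<times>real)\<times>(real\<times>real)) set"
  assumes H[measurable]: "H \<in> sets (\<mu> \<Otimes>\<^sub>M \<mu>)"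
   and so: "\<And>t u t' u'. snd t = snd t' \<Longrightarrow> snd u = snd u' \<Longrightarrow> (t,u) \<in> H \<Longrightarrow> (t',u') \<in> H"
   and ord: "\<And>t u. (t,u) \<in> H \<Longrightarrow> snd u \<le> snd t"
  shows "measure (\<mu> \<Otimes>\<^sub>M \<mu>) {p \<in> H. w < fst (snd p)} \<le> measure (\<mu> \<Otimes>\<^sub>M \<mu>) {p \<in> H. w < fst (fst p)}"
proof -
  interpret P: pair_prob_space \<mu> \<mu> ..
  have sp: "space (\<mu> \<Otimes>\<^sub>M \<mu>) = UNIV" by (simp add: space_pair_measure)
  have XA[measurable]: "{p \<in> H. w < fst (fst p)} \<in> sets (\<mu> \<Otimes>\<^sub>M \<mu>)"
  proof -
    have "{p \<in> H. w < fst (fst p)} = {p \<in> space (\<mu> \<Otimes>\<^sub>M \<mu>). p \<in> H \<and> w < fst (fst p)}" using sp by auto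
    also have "\<dots> \<in> sets (\<mu> \<Otimes>\<^sub>M \<mu>)" by measurable
    finally show ?thesis .
  qed
  have XB[measurable]: "{p \<in> H. w < fst (snd p)} \<in> sets (\<mu> \<Otimes>\<^sub>M \<mu>)"
  proof -
    have "{p \<in> H. w < fst (snd p)} = {p \<in> space (\<mu> \<Otimes>\<^sub>M \<mu>). p \<in> H \<and> w < fst (snd p)}" using sp by auto
    also have "\<dots> \<in> sets (\<mu> \<Otimes>\<^sub>M \<mu>)" by measurable
    finally show ?thesis .
  qed
  have intA: "integrable (\<mu> \<Otimes>\<^sub>M \<mu>) (\<lambda>p. indicator H p * G w (snd (fst p)))"
    using integrable_real_mult_indicator[OF H integrable_fst_mu] by (simp add: mult.commute)
  have intB: "integrable (\<mu> \<Otimes>\<^sub>M \<mu>) (\<lambda>p. indicator H p * G w (snd (snd p)))"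
    using integrable_real_mult_indicator[OF H integrable_snd_mu] by (simp add: mult.commute)
  have eqA: "measure (\<mu> \<Otimes>\<^sub>M \<mu>) {p \<in> H. w < fst (fst p)} = (\<integral>p. indicator H p * G w (snd (fst p)) \<partial>(\<mu> \<Otimes>\<^sub>M \<mu>))"
  proof -
    let ?X = "{p \<in> H. w < fst (fst p)}"
    have "measure (\<mu> \<Otimes>\<^sub>M \<mu>) ?X = (\<integral>p. indicator ?X p \<partial>(\<mu> \<Otimes>\<^sub>M \<mu>))"
      by (simp add: P.emeasure_eq_measure)
    also have "\<dots> = (\<integral>u. \<integral>t. indicator ?X (t,u) \<partial>\<mu> \<partial>\<mu>)"
      using P.integral_snd[of "\<lambda>t u. indicator ?X (t,u) :: real"] integrable_real_indicator[OF XA]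
      by (simp add: case_prod_beta' P.emeasure_eq_measure)
    also have "\<dots> = (\<integral>u. \<integral>t. indicator H (t,u) * G w (snd t) \<partial>\<mu> \<partial>\<mu>)"
    proof (rule Bochner_Integration.integral_cong[OF refl])
      fix u assume "u \<in> space \<mu>"
      define Hu where "Hu = {s. ((0::real,s),u) \<in> H}"
      have Hu: "Hu \<in> sets borel"
      proof -
        have "Hu = (\<lambda>s. ((0::real,s),u)) -` H \<inter> space borel" by (auto simp: Hu_def)
        also have "\<dots> \<in> sets borel" by measurable
        finally show ?thesis .
      qed
      have HH: "(t,u) \<in> H \<longleftrightarrow> snd t \<in> Hu" for t
        unfolding Hu_def using so[of t "(0, snd t)" u u] so[of "(0, snd t)" t u u] by auto
      have "(\<integral>t. indicator ?X (t,u) \<partial>\<mu>) = (\<integral>t. indicator {y \<in> space \<mu>. w < fst y \<and> snd y \<in> Hu} t \<partial>\<mu>)"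
        by (rule Bochner_Integration.integral_cong) (auto simp: indicator_def HH)
      also have "\<dots> = measure \<mu> {y \<in> space \<mu>. w < fst y \<and> snd y \<in> Hu}"
        using Hu by (simp add: M.emeasure_eq_measure)
      also have "\<dots> = (\<integral>y. indicator Hu (snd y) * G w (snd y) \<partial>\<mu>)" by (rule G_id[OF Hu])
      also have "\<dots> = (\<integral>t. indicator H (t,u) * G w (snd t) \<partial>\<mu>)"
        by (rule Bochner_Integration.integral_cong) (auto simp: indicator_def HH)
      finally show "(\<integral>t. indicator ?X (t,u) \<partial>\<mu>) = (\<integral>t. indicator H (t,u) * G w (snd t) \<partial>\<mu>)" .
    qed
    also have "\<dots> = (\<integral>p. indicator H p * G w (snd (fst p)) \<partial>(\<mu> \<Otimes>\<^sub>M \<mu>))"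
      using P.integral_snd[of "\<lambda>t u. indicator H (t,u) * G w (snd t)"] intA by (simp add: case_prod_beta')
    finally show ?thesis .
  qed
  have eqB: "measure (\<mu> \<Otimes>\<^sub>M \<mu>) {p \<in> H. w < fst (snd p)} = (\<integral>p. indicator H p * G w (snd (snd p)) \<partial>(\<mu> \<Otimes>\<^sub>M \<mu>))"
  proof -
    let ?X = "{p \<in> H. w < fst (snd p)}"
    have "measure (\<mu> \<Otimes>\<^sub>M \<mu>) ?X = (\<integral>p. indicator ?X p \<partial>(\<mu> \<Otimes>\<^sub>M \<mu>))"
      by (simp add: P.emeasure_eq_measure)
    also have "\<dots> = (\<integral>t. \<integral>u. indicator ?X (t,u) \<partial>\<mu> \<partial>\<mu>)"
      using P.integral_fst[of "\<lambda>t u. indicator ?X (t,u) :: real"] integrable_real_indicator[OF XB]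
      by (simp add: case_prod_beta' P.emeasure_eq_measure)
    also have "\<dots> = (\<integral>t. \<integral>u. indicator H (t,u) * G w (snd u) \<partial>\<mu> \<partial>\<mu>)"
    proof (rule Bochner_Integration.integral_cong[OF refl])
      fix t assume "t \<in> space \<mu>"
      define Ht where "Ht = {s. (t, (0::real,s)) \<in> H}"
      have Ht: "Ht \<in> sets borel"
      proof -
        have "Ht = (\<lambda>s. (t, (0::real,s))) -` H \<inter> space borel" by (auto simp: Ht_def)
        also have "\<dots> \<in> sets borel" by measurable
        finally show ?thesis .
      qed
      have HH: "(t,u) \<in> H \<longleftrightarrow> snd u \<in> Ht" for u
        unfolding Ht_def using so[of t t u "(0, snd u)"] so[of t t "(0, snd u)" u] by auto
      have "(\<integral>u. indicator ?X (t,u) \<partial>\<mu>) = (\<integral>u. indicator {y \<in> space \<mu>. w < fst y \<and> snd y \<in> Ht} u \<partial>\<mu>)"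
        by (rule Bochner_Integration.integral_cong) (auto simp: indicator_def HH)
      also have "\<dots> = measure \<mu> {y \<in> space \<mu>. w < fst y \<and> snd y \<in> Ht}"
        using Ht by (simp add: M.emeasure_eq_measure)
      also have "\<dots> = (\<integral>y. indicator Ht (snd y) * G w (snd y) \<partial>\<mu>)" by (rule G_id[OF Ht])
      also have "\<dots> = (\<integral>u. indicator H (t,u) * G w (snd u) \<partial>\<mu>)"
        by (rule Bochner_Integration.integral_cong) (auto simp: indicator_def HH)
      finally show "(\<integral>u. indicator ?X (t,u) \<partial>\<mu>) = (\<integral>u. indicator H (t,u) * G w (snd u) \<partial>\<mu>)" .
    qed
    also have "\<dots> = (\<integral>p. indicator H p * G w (snd (snd p)) \<partial>(\<mu> \<Otimes>\<^sub>M \<mu>))"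
      using P.integral_fst[of "\<lambda>t u. indicator H (t,u) * G w (snd u)"] intB by (simp add: case_prod_beta')
    finally show ?thesis .
  qed
  have "(\<integral>p. indicator H p * G w (snd (snd p)) \<partial>(\<mu> \<Otimes>\<^sub>M \<mu>)) \<le> (\<integral>p. indicator H p * G w (snd (fst p)) \<partial>(\<mu> \<Otimes>\<^sub>M \<mu>))"
  proof (rule integral_mono[OF intB intA])
    fix p assume "p \<in> space (\<mu> \<Otimes>\<^sub>M \<mu>)"
    show "indicator H p * G w (snd (snd p)) \<le> indicator H p * G w (snd (fst p))"
    proof (cases "p \<in> H")
      case True
      then have "snd (snd p) \<le> snd (fst p)" using ord[of "fst p" "snd p"] by simp
      then have "G w (snd (snd p)) \<le> G w (snd (fst p))" using G_mono[of w] by (simp add: mono_def)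
      then show ?thesis using True by simp
    qed simp
  qed
  then show ?thesis using eqA eqB by simp
qed
lemma PS: "product_sigma_finite (\<lambda>_::nat. \<mu>)"
  by (auto simp: product_sigma_finite_def intro: M.sigma_finite_measure_axioms)

lemma prob_PiM: "prob_space (PiM I (\<lambda>_::nat. \<mu>))"
  by (rule prob_space_PiM) (rule prob_mu)

lemma decomp:
  fixes J0 :: "nat set"
  assumes fin: "finite J0" and ab: "a \<noteq> b" "a \<notin> J0" "b \<notin> J0"
    and X[measurable]: "X \<in> sets (PiM (insert a (insert b J0)) (\<lambda>_. \<mu>))"
  shows "emeasure (PiM (insert a (insert b J0)) (\<lambda>_. \<mu>)) X =
    (\<integral>\<^sup>+x. (\<integral>\<^sup>+u. (\<integral>\<^sup>+t. indicator X (((x(b:=u))(a:=t))) \<partial>\<mu>) \<partial>\<mu>) \<partial>(PiM J0 (\<lambda>_. \<mu>)))"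
proof -
  interpret PS: product_sigma_finite "\<lambda>_::nat. \<mu>" by (rule PS)
  have "emeasure (PiM (insert a (insert b J0)) (\<lambda>_. \<mu>)) X =
     (\<integral>\<^sup>+x. indicator X x \<partial>PiM (insert a (insert b J0)) (\<lambda>_. \<mu>))"
    by simp
  also have "\<dots> = (\<integral>\<^sup>+x. (\<integral>\<^sup>+t. indicator X (x(a:=t)) \<partial>\<mu>) \<partial>PiM (insert b J0) (\<lambda>_. \<mu>))"
    by (rule PS.product_nn_integral_insert) (use fin ab in auto)
  also have "\<dots> = (\<integral>\<^sup>+x. (\<integral>\<^sup>+u. (\<integral>\<^sup>+t. indicator X (((x(b:=u))(a:=t))) \<partial>\<mu>) \<partial>\<mu>) \<partial>(PiM J0 (\<lambda>_. \<mu>)))"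
  proof (rule PS.product_nn_integral_insert[OF fin ab(3)])
    have m: "(\<lambda>(y,t). y(a:=t)) \<in> measurable (PiM (insert b J0) (\<lambda>_. \<mu>) \<Otimes>\<^sub>M \<mu>) (PiM (insert a (insert b J0)) (\<lambda>_. \<mu>))"
      by (rule measurable_add_dim)
    have "(\<lambda>(y,t). indicator X (y(a:=t)) :: ennreal) \<in> borel_measurable (PiM (insert b J0) (\<lambda>_. \<mu>) \<Otimes>\<^sub>M \<mu>)"
      using measurable_comp[OF m borel_measurable_indicator[OF X]] by (simp add: comp_def case_prod_beta')
    then show "(\<lambda>y. \<integral>\<^sup>+t. indicator X (y(a:=t)) \<partial>\<mu>) \<in> borel_measurable (PiM (insert b J0) (\<lambda>_. \<mu>))"
      by (rule M.borel_measurable_nn_integral[where f="\<lambda>y t. indicator X (y(a:=t))", simplified])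
  qed
  finally show ?thesis .
qed

lemma swap1:
  fixes I R :: "nat set" and A :: "(nat \<Rightarrow> real \<times> real) set" and C :: real
  assumes fin: "finite I" and ab: "a \<in> I" "b \<in> I" "a \<noteq> b"
    and R: "R \<subseteq> I" "a \<notin> R" "b \<notin> R"
    and A[measurable]: "A \<in> sets (PiM I (\<lambda>_. \<mu>))"
    and so: "\<And>x x'. x \<in> space (PiM I (\<lambda>_. \<mu>)) \<Longrightarrow> x' \<in> space (PiM I (\<lambda>_. \<mu>)) \<Longrightarrow>
              (\<forall>l\<in>I. snd (x l) = snd (x' l)) \<Longrightarrow> x \<in> A \<Longrightarrow> x' \<in> A"
    and ord: "\<And>x. x \<in> A \<Longrightarrow> snd (x b) \<le> snd (x a)"
  shows "measure (PiM I (\<lambda>_. \<mu>)) {x \<in> A. C < fst (x b) + (\<Sum>l\<in>R. fst (x l))}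
       \<le> measure (PiM I (\<lambda>_. \<mu>)) {x \<in> A. C < fst (x a) + (\<Sum>l\<in>R. fst (x l))}"
proof -
  define J0 where "J0 = I - {a,b}"
  have I_eq: "I = insert a (insert b J0)" using ab by (auto simp: J0_def)
  have fin0: "finite J0" using fin by (simp add: J0_def)
  have ab0: "a \<notin> J0" "b \<notin> J0" by (auto simp: J0_def)
  let ?P = "PiM I (\<lambda>_::nat. \<mu>)"
  interpret PP: prob_space ?P by (rule prob_PiM)
  interpret Q: pair_prob_space \<mu> \<mu> ..
  have Asp: "A \<subseteq> space ?P" using A by (rule sets.sets_into_space)
  have Xm: "{x \<in> A. C < fst (x c) + (\<Sum>l\<in>R. fst (x l))} \<in> sets ?P" if c: "c \<in> I" for c
  proof -
    have f: "(\<lambda>x. fst (x c) + (\<Sum>l\<in>R. fst (x l))) \<in> borel_measurable ?P"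
    proof (intro borel_measurable_add borel_measurable_sum)
      show "(\<lambda>x. fst (x c)) \<in> borel_measurable ?P"
        by (rule measurable_compose[OF measurable_component_singleton[OF c]]) measurable
      fix l assume "l \<in> R"
      then have l: "l \<in> I" using R by auto
      show "(\<lambda>x. fst (x l)) \<in> borel_measurable ?P"
        by (rule measurable_compose[OF measurable_component_singleton[OF l]]) measurable
    qed
    have "{x \<in> A. C < fst (x c) + (\<Sum>l\<in>R. fst (x l))} = A \<inter> {x \<in> space ?P. C < fst (x c) + (\<Sum>l\<in>R. fst (x l))}"
      using Asp by auto
    also have "\<dots> \<in> sets ?P" using f by measurable
    finally show ?thesis .
  qed
  have inner: "(\<integral>\<^sup>+u. (\<integral>\<^sup>+t. indicator {x \<in> A. C < fst (x c) + (\<Sum>l\<in>R. fst (x l))} ((x(b:=u))(a:=t)) \<partial>\<mu>) \<partial>\<mu>)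
     = emeasure (\<mu> \<Otimes>\<^sub>M \<mu>) {p \<in> {p. (x(b:=snd p))(a:=fst p) \<in> A}. (C - (\<Sum>l\<in>R. fst (x l))) < fst ((if c = a then fst else snd) p)}"
    if x: "x \<in> space (PiM J0 (\<lambda>_. \<mu>))" and c: "c = a \<or> c = b" for x c
  proof -
    let ?H = "{p. (x(b:=snd p))(a:=fst p) \<in> A}"
    have m1: "(\<lambda>p. x(b:=snd p)) \<in> measurable (\<mu> \<Otimes>\<^sub>M \<mu>) (PiM (insert b J0) (\<lambda>_. \<mu>))"
      by (rule measurable_fun_upd[where J=J0]) (use x in auto)
    have m2: "(\<lambda>p. (x(b:=snd p))(a:=fst p)) \<in> measurable (\<mu> \<Otimes>\<^sub>M \<mu>) ?P"
      unfolding I_eq by (rule measurable_fun_upd[OF _ m1]) auto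
    have "?H = (\<lambda>p. (x(b:=snd p))(a:=fst p)) -` A \<inter> space (\<mu> \<Otimes>\<^sub>M \<mu>)"
      by (auto simp: space_pair_measure)
    also have "\<dots> \<in> sets (\<mu> \<Otimes>\<^sub>M \<mu>)" using m2 A by measurable
    finally have H: "?H \<in> sets (\<mu> \<Otimes>\<^sub>M \<mu>)" .
    let ?Y = "{p \<in> ?H. (C - (\<Sum>l\<in>R. fst (x l))) < fst ((if c = a then fst else snd) p)}"
    have Y: "?Y \<in> sets (\<mu> \<Otimes>\<^sub>M \<mu>)"
    proof -
      have "?Y = ?H \<inter> {p \<in> space (\<mu> \<Otimes>\<^sub>M \<mu>). (C - (\<Sum>l\<in>R. fst (x l))) < fst ((if c = a then fst else snd) p)}"
        by (auto simp: space_pair_measure)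
      also have "\<dots> \<in> sets (\<mu> \<Otimes>\<^sub>M \<mu>)" using H by (cases "c = a") (simp_all, measurable)
      finally show ?thesis .
    qed
    have sumR: "(\<Sum>l\<in>R. fst (((x(b:=u))(a:=t)) l)) = (\<Sum>l\<in>R. fst (x l))" for u t
      using R by (intro sum.cong) auto
    have "(\<integral>\<^sup>+u. (\<integral>\<^sup>+t. indicator {x \<in> A. C < fst (x c) + (\<Sum>l\<in>R. fst (x l))} ((x(b:=u))(a:=t)) \<partial>\<mu>) \<partial>\<mu>)
       = (\<integral>\<^sup>+u. (\<integral>\<^sup>+t. indicator ?Y (t,u) \<partial>\<mu>) \<partial>\<mu>)"
    proof (intro nn_integral_cong)
      fix u t
      have e1: "fst (((x(b:=u))(a:=t)) c) = fst ((if c = a then fst else snd) (t,u))" using c ab by auto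
      have e2: "((x(b:=u))(a:=t)) \<in> A \<longleftrightarrow> (t,u) \<in> ?H" by simp
      show "indicator {x \<in> A. C < fst (x c) + (\<Sum>l\<in>R. fst (x l))} ((x(b:=u))(a:=t)) = (indicator ?Y (t,u) :: ennreal)"
        unfolding indicator_def using e1 e2 sumR[of u t] by (auto simp del: fun_upd_apply)
    qed
    also have "\<dots> = emeasure (\<mu> \<Otimes>\<^sub>M \<mu>) ?Y"
      using Q.nn_integral_snd[of "indicator ?Y"] Y by simp
    finally show ?thesis .
  qed
  have core_app: "emeasure (\<mu> \<Otimes>\<^sub>M \<mu>) {p \<in> {p. (x(b:=snd p))(a:=fst p) \<in> A}. w < fst (snd p)}
      \<le> emeasure (\<mu> \<Otimes>\<^sub>M \<mu>) {p \<in> {p. (x(b:=snd p))(a:=fst p) \<in> A}. w < fst (fst p)}"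
    if x: "x \<in> space (PiM J0 (\<lambda>_. \<mu>))" for x w
  proof -
    let ?H = "{p. (x(b:=snd p))(a:=fst p) \<in> A}"
    have m1: "(\<lambda>p. x(b:=snd p)) \<in> measurable (\<mu> \<Otimes>\<^sub>M \<mu>) (PiM (insert b J0) (\<lambda>_. \<mu>))"
      by (rule measurable_fun_upd[where J=J0]) (use x in auto)
    have m2: "(\<lambda>p. (x(b:=snd p))(a:=fst p)) \<in> measurable (\<mu> \<Otimes>\<^sub>M \<mu>) ?P"
      unfolding I_eq by (rule measurable_fun_upd[OF _ m1]) auto
    have "?H = (\<lambda>p. (x(b:=snd p))(a:=fst p)) -` A \<inter> space (\<mu> \<Otimes>\<^sub>M \<mu>)"
      by (auto simp: space_pair_measure)
    also have "\<dots> \<in> sets (\<mu> \<Otimes>\<^sub>M \<mu>)" using m2 A by measurable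
    finally have H: "?H \<in> sets (\<mu> \<Otimes>\<^sub>M \<mu>)" .
    have sp: "(x(b:=snd p))(a:=fst p) \<in> space ?P" for p
      using measurable_space[OF m2, of p] by (simp add: space_pair_measure)
    have "measure (\<mu> \<Otimes>\<^sub>M \<mu>) {p \<in> ?H. w < fst (snd p)} \<le> measure (\<mu> \<Otimes>\<^sub>M \<mu>) {p \<in> ?H. w < fst (fst p)}"
    proof (rule core[OF H])
      fix t u t' u' :: "real \<times> real"
      assume st: "snd t = snd t'" "snd u = snd u'" and tu: "(t,u) \<in> ?H"
      have "\<forall>l\<in>I. snd (((x(b:=u))(a:=t)) l) = snd (((x(b:=u'))(a:=t')) l)" using st by auto
      then show "(t',u') \<in> ?H" using so[OF sp[of "(t,u)"] sp[of "(t',u')"]] tu by auto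
    next
      fix t u assume "(t,u) \<in> ?H"
      then show "snd u \<le> snd t" using ord[of "(x(b:=u))(a:=t)"] ab by auto
    qed
    then show ?thesis by (simp add: Q.emeasure_eq_measure)
  qed
  have "emeasure ?P {x \<in> A. C < fst (x b) + (\<Sum>l\<in>R. fst (x l))} \<le> emeasure ?P {x \<in> A. C < fst (x a) + (\<Sum>l\<in>R. fst (x l))}"
  proof -
    have XA: "{x \<in> A. C < fst (x a) + (\<Sum>l\<in>R. fst (x l))} \<in> sets (PiM (insert a (insert b J0)) (\<lambda>_. \<mu>))"
      using Xm[OF ab(1)] I_eq by simp
    have XB: "{x \<in> A. C < fst (x b) + (\<Sum>l\<in>R. fst (x l))} \<in> sets (PiM (insert a (insert b J0)) (\<lambda>_. \<mu>))"
      using Xm[OF ab(2)] I_eq by simp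
    show ?thesis
      unfolding I_eq
      unfolding decomp[OF fin0 ab(3) ab0 XA] decomp[OF fin0 ab(3) ab0 XB]
    proof (rule nn_integral_mono)
      fix x assume x: "x \<in> space (PiM J0 (\<lambda>_. \<mu>))"
      show "(\<integral>\<^sup>+u. (\<integral>\<^sup>+t. indicator {x \<in> A. C < fst (x b) + (\<Sum>l\<in>R. fst (x l))} ((x(b:=u))(a:=t)) \<partial>\<mu>) \<partial>\<mu>)
         \<le> (\<integral>\<^sup>+u. (\<integral>\<^sup>+t. indicator {x \<in> A. C < fst (x a) + (\<Sum>l\<in>R. fst (x l))} ((x(b:=u))(a:=t)) \<partial>\<mu>) \<partial>\<mu>)"
        unfolding inner[OF x, of a, simplified] inner[OF x, of b, simplified] using ab(3)
        using core_app[OF x] by simp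
    qed
  qed
  then show ?thesis by (simp add: PP.emeasure_eq_measure)
qed

lemma card_diff_eq:
  assumes "finite L" "finite D" "card L = card D"
  shows "card (L - D) = card (D - L)"
proof -
  have "card (L - D) = card L - card (L \<inter> D)"
    using assms by (metis card_Diff_subset_Int finite_Int)
  moreover have "card (D - L) = card D - card (D \<inter> L)"
    using assms by (metis card_Diff_subset_Int finite_Int)
  ultimately show ?thesis using assms by (simp add: Int_commute)
qed

lemma exchange:
  fixes I :: "nat set" and A :: "(nat \<Rightarrow> real \<times> real) set" and C :: real
  assumes fin: "finite I"
    and A[measurable]: "A \<in> sets (PiM I (\<lambda>_. \<mu>))"
    and so: "\<And>x x'. x \<in> space (PiM I (\<lambda>_. \<mu>)) \<Longrightarrow> x' \<in> space (PiM I (\<lambda>_. \<mu>)) \<Longrightarrow>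
              (\<forall>l\<in>I. snd (x l) = snd (x' l)) \<Longrightarrow> x \<in> A \<Longrightarrow> x' \<in> A"
  shows "L \<subseteq> I \<Longrightarrow> D \<subseteq> I \<Longrightarrow> card L = card D \<Longrightarrow>
    (\<And>x d l. x \<in> A \<Longrightarrow> d \<in> D - L \<Longrightarrow> l \<in> L - D \<Longrightarrow> snd (x d) \<le> snd (x l)) \<Longrightarrow>
    measure (PiM I (\<lambda>_. \<mu>)) {x \<in> A. C < (\<Sum>l\<in>D. fst (x l))}
       \<le> measure (PiM I (\<lambda>_. \<mu>)) {x \<in> A. C < (\<Sum>l\<in>L. fst (x l))}"
proof (induction n \<equiv> "card (L - D)" arbitrary: L rule: less_induct)
  case (less L)
  have finL: "finite L" and finD: "finite D" using less.prems fin finite_subset by auto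
  show ?case
  proof (cases "L - D = {}")
    case True
    then have "L \<subseteq> D" by auto
    then have "L = D" using card_subset_eq[OF finD] less.prems by auto
    then show ?thesis by simp
  next
    case False
    then obtain a where a: "a \<in> L" "a \<notin> D" by auto
    have "card (D - L) = card (L - D)" using card_diff_eq[OF finL finD] less.prems by simp
    moreover have "card (L - D) > 0" using False finL by (simp add: card_gt_0_iff)
    ultimately have "D - L \<noteq> {}" by (metis card.empty less_irrefl)
    then obtain b where b: "b \<in> D" "b \<notin> L" by auto
    define L1 where "L1 = insert b (L - {a})"
    have ab: "a \<noteq> b" using a b by auto
    have L1I: "L1 \<subseteq> I" using less.prems a b by (auto simp: L1_def)
    have cardL1: "card L1 = card D"
    proof -
      have "card L > 0" using finL a by (auto simp: card_gt_0_iff)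
      then show ?thesis using less.prems finL a b by (simp add: L1_def card_insert_if)
    qed
    have L1D: "L1 - D = (L - D) - {a}" using a b by (auto simp: L1_def)
    have lt: "card (L1 - D) < card (L - D)"
      unfolding L1D using a finL by (intro card_Diff1_less) auto
    have ord1: "snd (x d) \<le> snd (x l)" if "x \<in> A" "d \<in> D - L1" "l \<in> L1 - D" for x d l
      using less.prems(4)[of x d l] that a b unfolding L1D by (auto simp: L1_def)
    have IH: "measure (PiM I (\<lambda>_. \<mu>)) {x \<in> A. C < (\<Sum>l\<in>D. fst (x l))}
       \<le> measure (PiM I (\<lambda>_. \<mu>)) {x \<in> A. C < (\<Sum>l\<in>L1. fst (x l))}"
      using less.hyps[OF lt L1I less.prems(2) cardL1 ord1] by blast
    have sw: "measure (PiM I (\<lambda>_. \<mu>)) {x \<in> A. C < fst (x b) + (\<Sum>l\<in>L - {a}. fst (x l))}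
       \<le> measure (PiM I (\<lambda>_. \<mu>)) {x \<in> A. C < fst (x a) + (\<Sum>l\<in>L - {a}. fst (x l))}"
    proof (rule swap1[OF fin _ _ ab _ _ _ A so])
      show "a \<in> I" "b \<in> I" using a b less.prems by auto
      show "L - {a} \<subseteq> I" "a \<notin> L - {a}" "b \<notin> L - {a}" using less.prems b by auto
    next
      fix x assume "x \<in> A" then show "snd (x b) \<le> snd (x a)" using less.prems(4)[of x b a] a b by auto
    qed auto
    have s1: "(\<Sum>l\<in>L1. fst (x l)) = fst (x b) + (\<Sum>l\<in>L - {a}. fst (x l))" for x :: "nat \<Rightarrow> real \<times> real"
      using finL b by (simp add: L1_def)
    have s2: "(\<Sum>l\<in>L. fst (x l)) = fst (x a) + (\<Sum>l\<in>L - {a}. fst (x l))" for x :: "nat \<Rightarrow> real \<times> real"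
      using finL a by (simp add: sum.remove)
    show ?thesis using IH sw unfolding s1 s2 by simp
  qed
qed

lemma pred_test:
  fixes I :: "nat set" assumes fin: "finite I" and l: "l \<in> I"
  shows "Measurable.pred (PiM I (\<lambda>_. \<mu>)) (\<lambda>x. real j \<le> (\<Sum>m\<in>I. if snd (x m) > snd (x l) \<or> (snd (x m) = snd (x l) \<and> m < l) then 1 else 0) + 1)"
proof -
  have sm[measurable]: "(\<lambda>x. snd (x m)) \<in> borel_measurable (PiM I (\<lambda>_. \<mu>))" if "m \<in> I" for m
    by (rule measurable_compose[OF measurable_component_singleton[OF that]]) measurable
  have p1: "Measurable.pred (PiM I (\<lambda>_. \<mu>)) (\<lambda>x. snd (x m) = snd (x l))" if "m \<in> I" for m
    unfolding pred_def by (rule borel_measurable_eq[OF sm[OF that] sm[OF l]])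
  have p2: "Measurable.pred (PiM I (\<lambda>_. \<mu>)) (\<lambda>x. snd (x m) > snd (x l))" if "m \<in> I" for m
    unfolding pred_def by (rule borel_measurable_less[OF sm[OF l] sm[OF that]])
  have f: "(\<lambda>x. (if snd (x m) > snd (x l) \<or> (snd (x m) = snd (x l) \<and> m < l) then 1 else 0::real)) \<in> borel_measurable (PiM I (\<lambda>_. \<mu>))" if "m \<in> I" for m
  proof -
    note [measurable] = p1[OF that] p2[OF that]
    show ?thesis by measurable
  qed
  have "(\<lambda>x. (\<Sum>m\<in>I. if snd (x m) > snd (x l) \<or> (snd (x m) = snd (x l) \<and> m < l) then 1 else 0) + 1 :: real) \<in> borel_measurable (PiM I (\<lambda>_. \<mu>))"
    by (intro borel_measurable_add borel_measurable_sum f measurable_const) auto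
  then show ?thesis by measurable
qed


lemma real_card_filter: "finite I \<Longrightarrow> real (card {m \<in> I. P m}) = (\<Sum>m\<in>I. if P m then 1 else 0)"
proof -
  assume fin: "finite I"
  have "real (card {m \<in> I. P m}) = (\<Sum>m\<in>{m \<in> I. P m}. 1)" by (rule real_of_card)
  also have "\<dots> = (\<Sum>m\<in>I. if P m then 1 else 0)" by (rule sum.inter_filter[OF fin])
  finally show ?thesis .
qed

lemma pred_rk:
  fixes I :: "nat set" assumes fin: "finite I" and l: "l \<in> I"
  shows "Measurable.pred (PiM I (\<lambda>_. \<mu>)) (\<lambda>x. j \<le> rk I (\<lambda>m. snd (x m)) l)"
proof -
  have eqf: "(\<lambda>x. j \<le> rk I (\<lambda>m. snd (x m)) l) = (\<lambda>x::nat \<Rightarrow> real \<times> real. real j \<le> (\<Sum>m\<in>I. if snd (x m) > snd (x l) \<or> (snd (x m) = snd (x l) \<and> m < l) then 1 else 0) + 1)"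
  proof
    fix x :: "nat \<Rightarrow> real \<times> real"
    have e: "real (rk I (\<lambda>m. snd (x m)) l) = (\<Sum>m\<in>I. if snd (x m) > snd (x l) \<or> (snd (x m) = snd (x l) \<and> m < l) then 1 else 0) + 1"
      unfolding rk_def using real_card_filter[OF fin] by simp
    show "(j \<le> rk I (\<lambda>m. snd (x m)) l) = (real j \<le> (\<Sum>m\<in>I. if snd (x m) > snd (x l) \<or> (snd (x m) = snd (x l) \<and> m < l) then 1 else 0) + 1)"
    proof -
      have "(j \<le> rk I (\<lambda>m. snd (x m)) l) = (real j \<le> real (rk I (\<lambda>m. snd (x m)) l))" by (simp only: of_nat_le_iff)
      then show ?thesis unfolding e .
    qed
  qed
  show ?thesis unfolding eqf by (rule pred_test[OF fin l])
qed

lemma set_eq_ball: "D \<subseteq> I \<Longrightarrow> ({l \<in> I. P l} = D) \<longleftrightarrow> (\<forall>l\<in>I. (l \<in> D \<longleftrightarrow> P l))"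
  by blast

lemma AD_sets:
  fixes I D :: "nat set" assumes fin: "finite I"
  shows "{x \<in> space (PiM I (\<lambda>_. \<mu>)). {l \<in> I. j \<le> rk I (\<lambda>m. snd (x m)) l} = D} \<in> sets (PiM I (\<lambda>_. \<mu>))"
proof (cases "D \<subseteq> I")
  case True
  have "{x \<in> space (PiM I (\<lambda>_. \<mu>)). {l \<in> I. j \<le> rk I (\<lambda>m. snd (x m)) l} = D}
      = {x \<in> space (PiM I (\<lambda>_. \<mu>)). \<forall>l\<in>I. (l \<in> D \<longleftrightarrow> j \<le> rk I (\<lambda>m. snd (x m)) l)}"
    by (intro Collect_cong conj_cong refl set_eq_ball[OF True])
  also have "\<dots> \<in> sets (PiM I (\<lambda>_. \<mu>))"
    unfolding pred_def[symmetric]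
  proof (rule pred_intros_countable_bounded(3))
    fix l assume l: "l \<in> I"
    show "Measurable.pred (PiM I (\<lambda>_. \<mu>)) (\<lambda>x. (l \<in> D \<longleftrightarrow> j \<le> rk I (\<lambda>m. snd (x m)) l))"
    proof (cases "l \<in> D")
      case True
      have e: "(\<lambda>x::nat \<Rightarrow> real \<times> real. (l \<in> D \<longleftrightarrow> j \<le> rk I (\<lambda>m. snd (x m)) l)) = (\<lambda>x. j \<le> rk I (\<lambda>m. snd (x m)) l)"
        using True by (simp only: simp_thms)
      show ?thesis unfolding e by (rule pred_rk[OF fin l])
    next
      case False
      have e: "(\<lambda>x::nat \<Rightarrow> real \<times> real. (l \<in> D \<longleftrightarrow> j \<le> rk I (\<lambda>m. snd (x m)) l)) = (\<lambda>x. \<not> j \<le> rk I (\<lambda>m. snd (x m)) l)"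
        using False by (simp only: simp_thms)
      show ?thesis unfolding e by (intro pred_intros_logic) (rule pred_rk[OF fin l])
    qed
  qed
  finally show ?thesis .
next
  case False
  then have e: "{x \<in> space (PiM I (\<lambda>_. \<mu>)). {l \<in> I. j \<le> rk I (\<lambda>m. snd (x m)) l} = D} = {}" by blast
  show ?thesis unfolding e by simp
qed

lemma sumfst_sets:
  fixes I D :: "nat set" assumes D: "D \<subseteq> I"
  shows "{x \<in> space (PiM I (\<lambda>_. \<mu>)). C < (\<Sum>l\<in>D. fst (x l))} \<in> sets (PiM I (\<lambda>_. \<mu>))"
proof -
  have f: "(\<lambda>x. (\<Sum>l\<in>D. fst (x l))) \<in> borel_measurable (PiM I (\<lambda>_. \<mu>))"
  proof (intro borel_measurable_sum)
    fix l assume "l \<in> D"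
    then have l: "l \<in> I" using D by auto
    show "(\<lambda>x. fst (x l)) \<in> borel_measurable (PiM I (\<lambda>_. \<mu>))"
      by (rule measurable_compose[OF measurable_component_singleton[OF l]]) measurable
  qed
  show ?thesis using f by measurable
qed

lemma bottom_le:
  fixes I L :: "nat set" and j :: nat and C :: real
  assumes fin: "finite I" and LI: "L \<subseteq> I" and cardB: "\<And>s. card {l \<in> I. j \<le> rk I s l} = card L"
  shows "measure (PiM I (\<lambda>_. \<mu>)) {x \<in> space (PiM I (\<lambda>_. \<mu>)). C < (\<Sum>l\<in>{l \<in> I. j \<le> rk I (\<lambda>m. snd (x m)) l}. fst (x l))}
       \<le> measure (PiM I (\<lambda>_. \<mu>)) {x \<in> space (PiM I (\<lambda>_. \<mu>)). C < (\<Sum>l\<in>L. fst (x l))}"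
proof -
  let ?P = "PiM I (\<lambda>_::nat. \<mu>)"
  interpret PP: prob_space ?P by (rule prob_PiM)
  define B where "B x = {l \<in> I. j \<le> rk I (\<lambda>m. snd (x m)) l}" for x :: "nat \<Rightarrow> real \<times> real"
  define AD where "AD D = {x \<in> space ?P. B x = D}" for D
  have AD_m: "AD D \<in> sets ?P" for D unfolding AD_def B_def by (rule AD_sets[OF fin])
  have rk_eq: "rk I (\<lambda>m. snd (x m)) l = rk I (\<lambda>m. snd (x' m)) l"
    if "\<forall>l\<in>I. snd (x l) = snd (x' l)" "l \<in> I" for x x' :: "nat \<Rightarrow> real \<times> real" and l
  proof -
    have "{m \<in> I. snd (x m) > snd (x l) \<or> (snd (x m) = snd (x l) \<and> m < l)}
        = {m \<in> I. snd (x' m) > snd (x' l) \<or> (snd (x' m) = snd (x' l) \<and> m < l)}"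
      using that by auto
    then show ?thesis unfolding rk_def by simp
  qed
  have so: "x' \<in> AD D" if "x \<in> space ?P" "x' \<in> space ?P" "\<forall>l\<in>I. snd (x l) = snd (x' l)" "x \<in> AD D" for x x' D
  proof -
    have "B x = B x'" unfolding B_def using rk_eq[OF that(3)] by auto
    then show ?thesis using that by (auto simp: AD_def)
  qed
  have ord: "snd (x d) \<le> snd (x l)" if "x \<in> AD D" "d \<in> D - L" "l \<in> L - D" for x D d l
  proof -
    have d: "d \<in> I" "j \<le> rk I (\<lambda>m. snd (x m)) d" using that by (auto simp: AD_def B_def)
    have l: "l \<in> I" "\<not> j \<le> rk I (\<lambda>m. snd (x m)) l" using that LI by (auto simp: AD_def B_def)
    have "rk I (\<lambda>m. snd (x m)) l < rk I (\<lambda>m. snd (x m)) d" using d(2) l(2) by simp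
    from rk_order[OF fin l(1) d(1) this] show ?thesis .
  qed
  have term_le: "measure ?P {x \<in> AD D. C < (\<Sum>l\<in>D. fst (x l))} \<le> measure ?P {x \<in> AD D. C < (\<Sum>l\<in>L. fst (x l))}"
    if D: "D \<in> Pow I" for D
  proof (cases "card L = card D")
    case True
    show ?thesis
      by (rule exchange[OF fin AD_m so LI _ True ord]) (use D in auto)
  next
    case False
    have "AD D = {}"
    proof (rule ccontr)
      assume "AD D \<noteq> {}"
      then obtain x where "x \<in> AD D" by auto
      then have "B x = D" by (simp add: AD_def)
      then show False using cardB[of "\<lambda>m. snd (x m)"] False by (simp add: B_def)
    qed
    then show ?thesis by simp
  qed
  have Xsets: "{x \<in> AD D. C < (\<Sum>l\<in>E. fst (x l))} \<in> sets ?P" if "E \<subseteq> I" for D E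
  proof -
    have "{x \<in> AD D. C < (\<Sum>l\<in>E. fst (x l))} = AD D \<inter> {x \<in> space ?P. C < (\<Sum>l\<in>E. fst (x l))}"
      by (auto simp: AD_def)
    then show ?thesis using AD_m sumfst_sets[OF that] by auto
  qed
  have BI: "B x \<in> Pow I" for x unfolding B_def by auto
  have U1: "{x \<in> space ?P. C < (\<Sum>l\<in>B x. fst (x l))} = (\<Union>D\<in>Pow I. {x \<in> AD D. C < (\<Sum>l\<in>D. fst (x l))})"
    unfolding AD_def using BI by blast
  have U2: "{x \<in> space ?P. C < (\<Sum>l\<in>L. fst (x l))} = (\<Union>D\<in>Pow I. {x \<in> AD D. C < (\<Sum>l\<in>L. fst (x l))})"
    unfolding AD_def using BI by blast
  have M1: "measure ?P (\<Union>D\<in>Pow I. {x \<in> AD D. C < (\<Sum>l\<in>D. fst (x l))}) = (\<Sum>D\<in>Pow I. measure ?P {x \<in> AD D. C < (\<Sum>l\<in>D. fst (x l))})"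
  proof (rule PP.finite_measure_finite_Union)
    show "finite (Pow I)" using fin by simp
    show "(\<lambda>D. {x \<in> AD D. C < (\<Sum>l\<in>D. fst (x l))}) ` Pow I \<subseteq> sets ?P" using Xsets by auto
    show "disjoint_family_on (\<lambda>D. {x \<in> AD D. C < (\<Sum>l\<in>D. fst (x l))}) (Pow I)"
      unfolding disjoint_family_on_def AD_def by auto
  qed
  have M2: "measure ?P (\<Union>D\<in>Pow I. {x \<in> AD D. C < (\<Sum>l\<in>L. fst (x l))}) = (\<Sum>D\<in>Pow I. measure ?P {x \<in> AD D. C < (\<Sum>l\<in>L. fst (x l))})"
  proof (rule PP.finite_measure_finite_Union)
    show "finite (Pow I)" using fin by simp
    show "(\<lambda>D. {x \<in> AD D. C < (\<Sum>l\<in>L. fst (x l))}) ` Pow I \<subseteq> sets ?P" using Xsets[OF LI] by auto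
    show "disjoint_family_on (\<lambda>D. {x \<in> AD D. C < (\<Sum>l\<in>L. fst (x l))}) (Pow I)"
      unfolding disjoint_family_on_def AD_def by auto
  qed
  have "measure ?P {x \<in> space ?P. C < (\<Sum>l\<in>B x. fst (x l))} \<le> measure ?P {x \<in> space ?P. C < (\<Sum>l\<in>L. fst (x l))}"
    unfolding U1 U2 M1 M2 by (rule sum_mono) (rule term_le)
  then show ?thesis by (simp add: B_def)
qed


lemma bottom_sets:
  fixes I :: "nat set" and j :: nat and C :: real
  assumes fin: "finite I"
  shows "{x \<in> space (PiM I (\<lambda>_. \<mu>)). C < (\<Sum>l\<in>{l \<in> I. j \<le> rk I (\<lambda>m. snd (x m)) l}. fst (x l))} \<in> sets (PiM I (\<lambda>_. \<mu>))"
proof -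
  let ?P = "PiM I (\<lambda>_::nat. \<mu>)"
  define B where "B x = {l \<in> I. j \<le> rk I (\<lambda>m. snd (x m)) l}" for x :: "nat \<Rightarrow> real \<times> real"
  define AD where "AD D = {x \<in> space ?P. B x = D}" for D
  have AD_m: "AD D \<in> sets ?P" for D unfolding AD_def B_def by (rule AD_sets[OF fin])
  have Xsets: "{x \<in> AD D. C < (\<Sum>l\<in>D. fst (x l))} \<in> sets ?P" if "D \<subseteq> I" for D
  proof -
    have "{x \<in> AD D. C < (\<Sum>l\<in>D. fst (x l))} = AD D \<inter> {x \<in> space ?P. C < (\<Sum>l\<in>D. fst (x l))}"
      by (auto simp: AD_def)
    then show ?thesis using AD_m sumfst_sets[OF that] by auto
  qed
  have BI: "B x \<in> Pow I" for x unfolding B_def by auto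
  have U1: "{x \<in> space ?P. C < (\<Sum>l\<in>B x. fst (x l))} = (\<Union>D\<in>Pow I. {x \<in> AD D. C < (\<Sum>l\<in>D. fst (x l))})"
    unfolding AD_def using BI by blast
  have "(\<Union>D\<in>Pow I. {x \<in> AD D. C < (\<Sum>l\<in>D. fst (x l))}) \<in> sets ?P"
    using fin Xsets by (intro sets.finite_UN) auto
  then show ?thesis using U1 by (simp add: B_def)
qed
end

theorem corollary2:
  fixes M :: "'a measure" and K :: nat and C :: real
    and V S :: "nat \<Rightarrow> 'a \<Rightarrow> real"
  assumes "prob_space M"
    and "C > 0" and "K \<ge> 2"
    and "\<And>j. j \<in> {1..K} \<Longrightarrow> V j \<in> borel_measurable M"
    and "\<And>j. j \<in> {1..K} \<Longrightarrow> S j \<in> borel_measurable M"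
    and "\<And>j \<omega>. j \<in> {1..K} \<Longrightarrow> \<omega> \<in> space M \<Longrightarrow> V j \<omega> \<ge> 0"
    and "prob_space.indep_vars M (\<lambda>_. borel \<Otimes>\<^sub>M borel) (\<lambda>j \<omega>. (V j \<omega>, S j \<omega>)) {1..K}"
    and "\<And>j. j \<in> {1..K} \<Longrightarrow>
           distr M (borel \<Otimes>\<^sub>M borel) (\<lambda>\<omega>. (V j \<omega>, S j \<omega>))
           = distr M (borel \<Otimes>\<^sub>M borel) (\<lambda>\<omega>. (V 1 \<omega>, S 1 \<omega>))"
    and "risk_score_condition M K V S"
  shows "phi_mMPA M K V S C \<le> phi_MPA M K V C
       \<and> phi_MPA M K V C \<le> min (phi_MP M K V C) phi_IND"
proof -
  note Vm = assms(4) and Sm = assms(5) and Vnn = assms(6) and ind = assms(7) and idd = assms(8)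
  interpret PM: prob_space M by (rule assms(1))
  define I where "I = {1..K}"
  have finI: "finite I" by (simp add: I_def)
  have oneI: "1 \<in> I" using assms(3) by (simp add: I_def)
  define \<mu> where "\<mu> = distr M (borel \<Otimes>\<^sub>M borel) (\<lambda>\<omega>. (V 1 \<omega>, S 1 \<omega>))"
  have X1m[measurable]: "(\<lambda>\<omega>. (V 1 \<omega>, S 1 \<omega>)) \<in> measurable M (borel \<Otimes>\<^sub>M borel)"
    using Vm[of 1] Sm[of 1] oneI by (simp add: I_def)
  from assms(9) obtain g :: "real \<Rightarrow> real \<Rightarrow> real" where
    gmono: "\<And>v. v \<ge> 0 \<Longrightarrow> mono (g v) \<and> g v \<in> borel_measurable borel" and
    gint: "\<And>j v. j \<in> {1..K} \<Longrightarrow> v \<ge> 0 \<Longrightarrow> integrable M (\<lambda>\<omega>. g v (S j \<omega>))" and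
    gid: "\<And>j v A. j \<in> {1..K} \<Longrightarrow> v \<ge> 0 \<Longrightarrow> A \<in> sets borel \<Longrightarrow>
            measure M {\<omega> \<in> space M. V j \<omega> > v \<and> S j \<omega> \<in> A}
            = (\<integral>\<omega>. indicator A (S j \<omega>) * g v (S j \<omega>) \<partial>M)"
    unfolding risk_score_condition_def by blast
  define G where "G w s = (if w < 0 then 1 else g w s)" for w s
  have rpm: "rpm \<mu> G"
  proof (rule rpm.intro)
    show "prob_space \<mu>" unfolding \<mu>_def by (rule PM.prob_space_distr[OF X1m])
    show "sets \<mu> = sets (borel \<Otimes>\<^sub>M borel)" by (simp add: \<mu>_def)
    fix w :: real
    show "mono (G w)" using gmono[of w] by (cases "w < 0") (auto simp: G_def mono_def)
    have Geq: "G w = (if w < 0 then (\<lambda>_. 1) else g w)" by (auto simp: G_def fun_eq_iff)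
    show Gm: "G w \<in> borel_measurable borel" using gmono[of w] unfolding Geq by (cases "w < 0") auto
    have Gm2[measurable]: "(\<lambda>y. G w (snd y)) \<in> borel_measurable (borel \<Otimes>\<^sub>M borel)"
      using measurable_comp[OF measurable_snd Gm] by (simp add: comp_def)
    show "integrable \<mu> (\<lambda>y. G w (snd y))"
      unfolding \<mu>_def
    proof (subst integrable_distr_eq)
      show "integrable M (\<lambda>x. G w (snd (V 1 x, S 1 x)))"
      proof (cases "w < 0")
        case True then show ?thesis by (simp add: G_def)
      next
        case False then show ?thesis using gint[of 1 w] oneI by (simp add: G_def I_def)
      qed
    qed (use Gm2 X1m in auto)
    fix A :: "real set" assume A[measurable]: "A \<in> sets borel"
    have e1: "measure \<mu> {y \<in> space \<mu>. w < fst y \<and> snd y \<in> A} = measure M {\<omega> \<in> space M. V 1 \<omega> > w \<and> S 1 \<omega> \<in> A}"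
    proof -
      have s: "{y \<in> space \<mu>. w < fst y \<and> snd y \<in> A} \<in> sets (borel \<Otimes>\<^sub>M borel)"
        by (simp add: \<mu>_def) measurable
      show ?thesis unfolding \<mu>_def using measure_distr[OF X1m s[unfolded \<mu>_def]]
        by (simp add: space_pair_measure vimage_def Int_def conj_commute)
    qed
    have e2: "(\<integral>y. indicator A (snd y) * G w (snd y) \<partial>\<mu>) = (\<integral>\<omega>. indicator A (S 1 \<omega>) * G w (S 1 \<omega>) \<partial>M)"
    proof -
      have fm: "(\<lambda>y. indicator A (snd y) * G w (snd y) :: real) \<in> borel_measurable (borel \<Otimes>\<^sub>M borel)" by measurable
      show ?thesis unfolding \<mu>_def using integral_distr[OF X1m fm] by simp
    qed
    show "measure \<mu> {y \<in> space \<mu>. w < fst y \<and> snd y \<in> A} = (\<integral>y. indicator A (snd y) * G w (snd y) \<partial>\<mu>)"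
      unfolding e1 e2
    proof (cases "w < 0")
      case False
      then show "measure M {\<omega> \<in> space M. V 1 \<omega> > w \<and> S 1 \<omega> \<in> A} = (\<integral>\<omega>. indicator A (S 1 \<omega>) * G w (S 1 \<omega>) \<partial>M)"
        using gid[of 1 w A] oneI A by (simp add: G_def I_def)
    next
      case True
      have "{\<omega> \<in> space M. V 1 \<omega> > w \<and> S 1 \<omega> \<in> A} = S 1 -` A \<inter> space M"
        using Vnn[of 1] oneI True by (force simp: I_def)
      moreover have "(\<integral>\<omega>. indicator A (S 1 \<omega>) * G w (S 1 \<omega>) \<partial>M) = (\<integral>\<omega>. indicator (S 1 -` A \<inter> space M) \<omega> \<partial>M)"
        using True by (intro Bochner_Integration.integral_cong) (auto simp: G_def indicator_def)
      moreover have "S 1 -` A \<inter> space M \<in> sets M"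
        using Sm[of 1] oneI A by (simp add: I_def measurable_sets)
      ultimately show "measure M {\<omega> \<in> space M. V 1 \<omega> > w \<and> S 1 \<omega> \<in> A} = (\<integral>\<omega>. indicator A (S 1 \<omega>) * G w (S 1 \<omega>) \<partial>M)"
        by (simp add: PM.emeasure_eq_measure)
    qed
  qed
  interpret R: rpm \<mu> G by (rule rpm)
  let ?P = "PiM I (\<lambda>_::nat. \<mu>)"
  define X where "X \<omega> = (\<lambda>l\<in>I. (V l \<omega>, S l \<omega>))" for \<omega>
  have Xm: "X \<in> measurable M (PiM I (\<lambda>_. borel \<Otimes>\<^sub>M borel))"
    unfolding X_def
  proof (rule measurable_restrict)
    fix i assume "i \<in> I"
    then have [measurable]: "V i \<in> borel_measurable M" "S i \<in> borel_measurable M"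
      using Vm Sm by (auto simp: I_def)
    show "(\<lambda>\<omega>. (V i \<omega>, S i \<omega>)) \<in> measurable M (borel \<Otimes>\<^sub>M borel)" by measurable
  qed
  have setsP: "sets (PiM I (\<lambda>_. borel \<Otimes>\<^sub>M borel)) = sets ?P"
    by (rule sets_PiM_cong) (simp_all add: \<mu>_def)
  have dist: "distr M (PiM I (\<lambda>_. borel \<Otimes>\<^sub>M borel)) X = ?P"
  proof -
    have "distr M (PiM I (\<lambda>_. borel \<Otimes>\<^sub>M borel)) (\<lambda>x. \<lambda>i\<in>I. (V i x, S i x))
        = PiM I (\<lambda>i. distr M (borel \<Otimes>\<^sub>M borel) (\<lambda>\<omega>. (V i \<omega>, S i \<omega>)))"
    proof -
      have ne: "I \<noteq> {}" using oneI by auto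
      have rv: "(\<lambda>\<omega>. (V i \<omega>, S i \<omega>)) \<in> measurable M (borel \<Otimes>\<^sub>M borel)" if "i \<in> I" for i
      proof -
        have [measurable]: "V i \<in> borel_measurable M" "S i \<in> borel_measurable M"
          using Vm Sm that by (auto simp: I_def)
        show ?thesis by measurable
      qed
      have iv: "PM.indep_vars (\<lambda>_. borel \<Otimes>\<^sub>M borel) (\<lambda>i \<omega>. (V i \<omega>, S i \<omega>)) I"
        using ind by (simp add: I_def)
      show ?thesis using PM.indep_vars_iff_distr_eq_PiM'[where I=I and M'="\<lambda>_. borel \<Otimes>\<^sub>M borel" and X="\<lambda>i \<omega>. (V i \<omega>, S i \<omega>)", OF ne rv] iv by blast
    qed
    also have "\<dots> = ?P"
    proof (rule PiM_cong)
      fix i assume "i \<in> I"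
      then show "distr M (borel \<Otimes>\<^sub>M borel) (\<lambda>\<omega>. (V i \<omega>, S i \<omega>)) = \<mu>"
        unfolding \<mu>_def by (intro idd) (simp add: I_def)
    qed simp
    finally show ?thesis unfolding X_def[abs_def] .
  qed
  have tr: "measure M (X -` Y \<inter> space M) = measure ?P Y" if "Y \<in> sets ?P" for Y
    using measure_distr[OF Xm, of Y] that setsP dist by simp
  have trs: "X -` Y \<inter> space M \<in> sets M" if "Y \<in> sets ?P" for Y
    using measurable_sets[OF Xm, of Y] that setsP by simp
  have Xsp: "X \<omega> \<in> space ?P" for \<omega> by (simp add: X_def space_PiM)
  have Tsm: "Tsum K V j \<in> borel_measurable M" if "1 \<le> j" for j
    unfolding Tsum_def[abs_def]
    by (rule borel_measurable_sum) (use Vm that in auto)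
  have cdfeq: "cdf (distr M borel (Tsum K V j)) C = measure M {\<omega> \<in> space M. Tsum K V j \<omega> \<le> C}" if "1 \<le> j" for j
    unfolding cdf_def2 using measure_distr[OF Tsm[OF that], of "{..C}"]
    by (simp add: vimage_def Int_def conj_commute)
  have compl: "measure M {\<omega> \<in> space M. f \<omega> \<le> C} = 1 - measure M {\<omega> \<in> space M. C < f \<omega>}"
    if "{\<omega> \<in> space M. C < f \<omega>} \<in> sets M" for f :: "'a \<Rightarrow> real"
  proof -
    have "{\<omega> \<in> space M. f \<omega> \<le> C} = space M - {\<omega> \<in> space M. C < f \<omega>}" by auto
    then show ?thesis using PM.prob_compl[OF that] by simp
  qed
  have key: "cdf (distr M borel (Tsum K V j)) C \<le> measure M {\<omega> \<in> space M. Tord K V S j \<omega> \<le> C}"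
    if j: "j \<in> {1..K-1}" for j
  proof -
    have j1: "1 \<le> j" and jK: "j \<le> K" using j by auto
    define Y1 where "Y1 = {x \<in> space ?P. C < (\<Sum>l\<in>{l \<in> I. j \<le> rk I (\<lambda>m. snd (x m)) l}. fst (x l))}"
    define Y2 where "Y2 = {x \<in> space ?P. C < (\<Sum>l\<in>{j..K}. fst (x l))}"
    have Y1s: "Y1 \<in> sets ?P" unfolding Y1_def by (rule R.bottom_sets[OF finI])
    have Y2s: "Y2 \<in> sets ?P" unfolding Y2_def by (rule R.sumfst_sets) (use j1 in \<open>auto simp: I_def\<close>)
    have cardB: "card {l \<in> I. j \<le> rk I s l} = card {j..K}" for s
    proof -
      have "{r \<in> {1..card I}. j \<le> r} = {j..K}" using j1 by (auto simp: I_def)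
      then show ?thesis using rk_card[OF finI, of j s] by simp
    qed
    have le: "measure ?P Y1 \<le> measure ?P Y2"
      unfolding Y1_def Y2_def by (rule R.bottom_le[OF finI _ cardB]) (use j1 in \<open>auto simp: I_def\<close>)
    have p1: "X -` Y1 \<inter> space M = {\<omega> \<in> space M. C < Tord K V S j \<omega>}"
    proof -
      have "(\<Sum>l\<in>{l \<in> I. j \<le> rk I (\<lambda>m. snd (X \<omega> m)) l}. fst (X \<omega> l)) = Tord K V S j \<omega>" for \<omega>
      proof -
        have "rk I (\<lambda>m. snd (X \<omega> m)) l = score_rank K S l \<omega>" if "l \<in> I" for l
        proof -
          have "{m \<in> I. snd (X \<omega> m) > snd (X \<omega> l) \<or> (snd (X \<omega> m) = snd (X \<omega> l) \<and> m < l)}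
              = {m \<in> {1..K}. S m \<omega> > S l \<omega> \<or> (S m \<omega> = S l \<omega> \<and> m < l)}"
            using that by (auto simp: X_def I_def)
          then show ?thesis unfolding rk_def score_rank_def by simp
        qed
        then have "{l \<in> I. j \<le> rk I (\<lambda>m. snd (X \<omega> m)) l} = {l \<in> {1..K}. j \<le> score_rank K S l \<omega>}"
          by (auto simp: I_def)
        moreover have "(\<Sum>l\<in>{l \<in> {1..K}. j \<le> score_rank K S l \<omega>}. fst (X \<omega> l)) = (\<Sum>l\<in>{l \<in> {1..K}. j \<le> score_rank K S l \<omega>}. V l \<omega>)"
          by (rule sum.cong) (auto simp: X_def I_def)
        ultimately show ?thesis unfolding Tord_def by simp
      qed
      then show ?thesis using Xsp by (auto simp: Y1_def)
    qed
    have p2: "X -` Y2 \<inter> space M = {\<omega> \<in> space M. C < Tsum K V j \<omega>}"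
    proof -
      have "(\<Sum>l\<in>{j..K}. fst (X \<omega> l)) = Tsum K V j \<omega>" for \<omega>
        unfolding Tsum_def using j1 by (intro sum.cong) (auto simp: X_def I_def)
      then show ?thesis using Xsp by (auto simp: Y2_def)
    qed
    have "cdf (distr M borel (Tsum K V j)) C = 1 - measure M {\<omega> \<in> space M. C < Tsum K V j \<omega>}"
      unfolding cdfeq[OF j1] by (rule compl) (use trs[OF Y2s] p2 in simp)
    also have "\<dots> = 1 - measure ?P Y2" using tr[OF Y2s] p2 by simp
    also have "\<dots> \<le> 1 - measure ?P Y1" using le by simp
    also have "\<dots> = 1 - measure M {\<omega> \<in> space M. C < Tord K V S j \<omega>}" using tr[OF Y1s] p1 by simp
    also have "\<dots> = measure M {\<omega> \<in> space M. Tord K V S j \<omega> \<le> C}"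
      by (rule compl[symmetric]) (use trs[OF Y1s] p1 in simp)
    finally show ?thesis .
  qed
  define p where "p = measure M {\<omega> \<in> space M. Tsum K V 1 \<omega> > C}"
  have p0: "p \<ge> 0" by (simp add: p_def)
  have F1: "cdf (distr M borel (Tsum K V j)) C \<ge> 1 - p" if j: "j \<in> {1..K-1}" for j
  proof -
    have j1: "1 \<le> j" using j by auto
    have s1: "{\<omega> \<in> space M. C < Tsum K V 1 \<omega>} \<in> sets M"
      using Tsm[of 1] by measurable
    have sj: "{\<omega> \<in> space M. Tsum K V 1 \<omega> \<le> C} \<subseteq> {\<omega> \<in> space M. Tsum K V j \<omega> \<le> C}"
    proof safe
      fix \<omega> assume w: "\<omega> \<in> space M" "Tsum K V 1 \<omega> \<le> C"
      have "Tsum K V j \<omega> \<le> Tsum K V 1 \<omega>"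
        unfolding Tsum_def using j1 Vnn w(1) by (intro sum_mono2) auto
      then show "Tsum K V j \<omega> \<le> C" using w by simp
    qed
    have sjm: "{\<omega> \<in> space M. Tsum K V j \<omega> \<le> C} \<in> sets M"
      using Tsm[OF j1] by measurable
    have "1 - p = measure M {\<omega> \<in> space M. Tsum K V 1 \<omega> \<le> C}"
      unfolding p_def by (rule compl[symmetric, OF s1])
    also have "\<dots> \<le> measure M {\<omega> \<in> space M. Tsum K V j \<omega> \<le> C}"
      by (rule PM.finite_measure_mono[OF sj sjm])
    also have "\<dots> = cdf (distr M borel (Tsum K V j)) C" using cdfeq[OF j1] by simp
    finally show ?thesis .
  qed
  have Kpos: "real K > 0" using assms(3) by simp
  let ?F = "\<lambda>j. cdf (distr M borel (Tsum K V j)) C"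
  let ?Q = "\<lambda>j. measure M {\<omega> \<in> space M. Tord K V S j \<omega> \<le> C}"
  have sum1: "(\<Sum>j = 1..K - 1. ?F j) \<le> (\<Sum>j = 1..K - 1. ?Q j)"
    by (rule sum_mono) (rule key)
  have sum2: "(\<Sum>j = 1..K - 1. ?F j) \<ge> 0"
    by (rule sum_nonneg) (simp add: cdf_def2)
  have sum3: "(\<Sum>j = 1..K - 1. ?F j) \<ge> real (K - 1) * (1 - p)"
  proof -
    have "(\<Sum>j = 1..K - 1. ?F j) \<ge> (\<Sum>j = 1..K - 1. 1 - p)"
      by (rule sum_mono) (rule F1)
    then show ?thesis by simp
  qed
  have A: "phi_mMPA M K V S C \<le> phi_MPA M K V C"
    unfolding phi_mMPA_def phi_MPA_def using sum1 Kpos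
    by (simp add: divide_right_mono)
  have B: "phi_MPA M K V C \<le> phi_IND"
    unfolding phi_MPA_def phi_IND_def using sum2 Kpos by simp
  have C: "phi_MPA M K V C \<le> phi_MP M K V C"
  proof -
    have "phi_MPA M K V C \<le> 1 - (1 / real K) * (real (K - 1) * (1 - p))"
      unfolding phi_MPA_def using sum3 Kpos by (simp add: divide_right_mono)
    also have "\<dots> = 1 / real K + p * (real K - 1) / real K"
      using Kpos assms(3) by (simp add: of_nat_diff field_simps)
    also have "\<dots> \<le> 1 / real K + p"
      using Kpos p0 by (simp add: field_simps)
    also have "\<dots> = phi_MP M K V C" by (simp add: phi_MP_def p_def)
    finally show ?thesis .
  qed
  show ?thesis using A B C by simp
qed
end
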